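(* Let $\lambda_2$ be the second smallest eigenvalue of the Laplacian of $G$ and $\psi_c=8\,n\,\Delta\, s_{\max}/\lambda_2$. Suppose $m\ge 8\,\delta\, n^2\,\mathcal{S}\, s_{\max}$ for some $\delta>1$. Then every state $x$ with $\Psi_0(x)\le 4\psi_c$ is a $2/(1+\delta)$-approximate Nash equilibrium.
   Context: $G=(V,E)$ is a connected undirected graph on $n\ge2$ vertices with maximum degree $\Delta$; its Laplacian $L$ has $L_{ii}=\deg(i)$, $L_{ij}=-1$ if $\{i,j\}\in E$, $0$ otherwise. Processor $i$ has speed $s_i>0$, scaled so the smallest speed is $1$; $s_{\max}=\max_i s_i$, $\mathcal{S}=\sum_i s_i$. There are $m$ unit tasks; a state $x$ assigns each task to a processor, $w_i(x)$ is the number of tasks on $i$ and $\ell_i(x)=w_i(x)/s_i$. $\Psi_0(x)=\sum_i (w_i(x)-m s_i/\mathcal{S})^2/s_i$. A state is an $\varepsilon$-approximate Nash equilibrium if $(1-\varepsilon)\ell_i-\ell_j\le 1/s_j$ for every ordered pair $(i,j)$ of adjacent processors. *)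

theory Defs
  imports "Jordan_Normal_Form.Char_Poly" "HOL-Library.Multiset"
begin

definition adj_on :: "nat \<Rightarrow> (nat \<Rightarrow> nat \<Rightarrow> bool) \<Rightarrow> nat \<Rightarrow> nat \<Rightarrow> bool" where
  "adj_on n E i j \<longleftrightarrow> i < n \<and> j < n \<and> E i j"

definition simple_connected_graph :: "nat \<Rightarrow> (nat \<Rightarrow> nat \<Rightarrow> bool) \<Rightarrow> bool" where
  "simple_connected_graph n E \<longleftrightarrow>
     (\<forall>i j. E i j \<longrightarrow> E j i) \<and> (\<forall>i. \<not> E i i) \<and>
     (\<forall>i<n. \<forall>j<n. (adj_on n E)\<^sup>*\<^sup>* i j)"

definition degree :: "nat \<Rightarrow> (nat \<Rightarrow> nat \<Rightarrow> bool) \<Rightarrow> nat \<Rightarrow> nat" where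
  "degree n E i = card {j. j < n \<and> E i j}"

definition max_degree :: "nat \<Rightarrow> (nat \<Rightarrow> nat \<Rightarrow> bool) \<Rightarrow> nat" where
  "max_degree n E = Max (degree n E ` {0..<n})"

definition laplacian :: "nat \<Rightarrow> (nat \<Rightarrow> nat \<Rightarrow> bool) \<Rightarrow> real mat" where
  "laplacian n E = mat n n (\<lambda>(i, j). if i = j then real (degree n E i)
                                      else if E i j then -1 else 0)"

text \<open>Eigenvalues with multiplicity (roots of the characteristic polynomial), sorted
  increasingly; lambda2 is the second smallest one.\<close>

definition lambda2 :: "nat \<Rightarrow> (nat \<Rightarrow> nat \<Rightarrow> bool) \<Rightarrow> real" where
  "lambda2 n E = sorted_list_of_multiset (proots (char_poly (laplacian n E))) ! 1"

definition smax :: "nat \<Rightarrow> (nat \<Rightarrow> real) \<Rightarrow> real" where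
  "smax n s = Max (s ` {0..<n})"

definition total_speed :: "nat \<Rightarrow> (nat \<Rightarrow> real) \<Rightarrow> real" where
  "total_speed n s = (\<Sum>i<n. s i)"

text \<open>A state x assigns each task t < m to a processor x t < n.\<close>

definition valid_state :: "nat \<Rightarrow> nat \<Rightarrow> (nat \<Rightarrow> nat) \<Rightarrow> bool" where
  "valid_state n m x \<longleftrightarrow> (\<forall>t<m. x t < n)"

definition weight :: "nat \<Rightarrow> (nat \<Rightarrow> nat) \<Rightarrow> nat \<Rightarrow> nat" where
  "weight m x i = card {t. t < m \<and> x t = i}"

definition load :: "nat \<Rightarrow> (nat \<Rightarrow> real) \<Rightarrow> (nat \<Rightarrow> nat) \<Rightarrow> nat \<Rightarrow> real" where
  "load m s x i = real (weight m x i) / s i"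

definition Psi0 :: "nat \<Rightarrow> nat \<Rightarrow> (nat \<Rightarrow> real) \<Rightarrow> (nat \<Rightarrow> nat) \<Rightarrow> real" where
  "Psi0 n m s x = (\<Sum>i<n. (real (weight m x i) - real m * s i / total_speed n s)\<^sup>2 / s i)"

definition approx_NE :: "nat \<Rightarrow> (nat \<Rightarrow> nat \<Rightarrow> bool) \<Rightarrow> nat \<Rightarrow> (nat \<Rightarrow> real) \<Rightarrow> real
                           \<Rightarrow> (nat \<Rightarrow> nat) \<Rightarrow> bool" where
  "approx_NE n E m s \<epsilon> x \<longleftrightarrow>
     (\<forall>i<n. \<forall>j<n. E i j \<longrightarrow> (1 - \<epsilon>) * load m s x i - load m s x j \<le> 1 / s j)"

end

theory Submission
  imports Defs "HOL-Library.Transitive_Closure_Table"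
begin

lemma sym_eig_real:
  fixes A :: "real mat" and a :: complex
  assumes A: "A \<in> carrier_mat n n"
    and sym: "\<And>i j. i < n \<Longrightarrow> j < n \<Longrightarrow> A $$ (i,j) = A $$ (j,i)"
    and root: "poly (char_poly (map_mat complex_of_real A)) a = 0"
  shows "Im a = 0"
proof -
  let ?B = "map_mat complex_of_real A"
  have B: "?B \<in> carrier_mat n n" using A by simp
  have "eigenvalue ?B a" using eigenvalue_root_char_poly[OF B] root by simp
  then obtain v where v: "v \<in> carrier_vec n" "v \<noteq> 0\<^sub>v n" "?B *\<^sub>v v = a \<cdot>\<^sub>v v"
    unfolding eigenvalue_def eigenvector_def using B by auto
  have comp: "(\<Sum>j<n. complex_of_real (A $$ (i,j)) * v $ j) = a * v $ i" if i: "i < n" for i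
  proof -
    have "(?B *\<^sub>v v) $ i = (a \<cdot>\<^sub>v v) $ i" using v(3) by simp
    thus ?thesis using i A v(1) by (auto simp: mult_mat_vec_def scalar_prod_def lessThan_atLeast0)
  qed
  define S where "S = (\<Sum>i<n. cnj (v $ i) * (\<Sum>j<n. complex_of_real (A $$ (i,j)) * v $ j))"
  define N where "N = (\<Sum>i<n. cnj (v $ i) * v $ i)"
  have "S = (\<Sum>i<n. cnj (v $ i) * (a * v $ i))" unfolding S_def by (intro sum.cong refl) (simp add: comp)
  hence S1: "S = a * N" unfolding N_def by (simp add: sum_distrib_left mult_ac)
  have "cnj S = (\<Sum>i<n. v $ i * (\<Sum>j<n. complex_of_real (A $$ (i,j)) * cnj (v $ j)))"
    unfolding S_def by (simp add: sum_distrib_left)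
  also have "\<dots> = (\<Sum>i<n. \<Sum>j<n. v $ i * complex_of_real (A $$ (i,j)) * cnj (v $ j))"
    by (simp add: sum_distrib_left mult_ac)
  also have "\<dots> = (\<Sum>j<n. \<Sum>i<n. v $ i * complex_of_real (A $$ (i,j)) * cnj (v $ j))"
    by (rule sum.swap)
  also have "\<dots> = (\<Sum>j<n. \<Sum>i<n. cnj (v $ j) * (complex_of_real (A $$ (j,i)) * v $ i))"
    by (intro sum.cong refl, simp add: sym mult_ac)
  also have "\<dots> = S" unfolding S_def by (simp add: sum_distrib_left)
  finally have S2: "cnj S = S" .
  have NR: "N = complex_of_real (\<Sum>i<n. (cmod (v $ i))\<^sup>2)"
    unfolding N_def of_real_sum by (intro sum.cong refl) (metis complex_norm_square mult.commute)
  have "\<exists>i<n. v $ i \<noteq> 0" using v(1,2) by (auto simp: vec_eq_iff)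
  then obtain i where i: "i < n" "v $ i \<noteq> 0" by auto
  have "(\<Sum>i<n. (cmod (v $ i))\<^sup>2) > 0"
    by (rule sum_pos2[of _ i]) (use i in auto)
  hence N0: "N \<noteq> 0" "cnj N = N" unfolding NR by (simp del: of_real_sum of_real_power, simp only: complex_cnj_complex_of_real)
  from S1 S2 have "cnj a * cnj N = a * N" by simp
  with N0 have "cnj a = a" by simp
  thus ?thesis by (metis Reals_cnj_iff complex_is_Real_iff)
qed

lemma map_poly_prod_lin:
  "map_poly complex_of_real (\<Prod>r\<leftarrow>rs. [:- r, 1:]) = (\<Prod>r\<leftarrow>rs. [:- complex_of_real r, 1:])"
proof (induction rs)
  case Nil thus ?case by simp
next
  case (Cons r rs)
  interpret m: map_poly_comm_ring_hom "complex_of_real" ..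
  have "map_poly complex_of_real ([:- r, 1:] * (\<Prod>r\<leftarrow>rs. [:- r, 1:])) =
     map_poly complex_of_real [:- r, 1:] * map_poly complex_of_real (\<Prod>r\<leftarrow>rs. [:- r, 1:])"
    by (rule m.hom_mult)
  thus ?case using Cons by simp
qed

lemma real_split:
  fixes p :: "real poly"
  assumes eq: "map_poly complex_of_real p = (\<Prod>a\<leftarrow>as. [:- a, 1:])"
    and re: "\<forall>a\<in>set as. Im a = 0"
  shows "size (proots p) = length as"
proof -
  define rs where "rs = map Re as"
  have "(\<Prod>a\<leftarrow>as. [:- a, 1:]) = (\<Prod>r\<leftarrow>rs. [:- complex_of_real r, 1:])"
    unfolding rs_def using re
    by (induction as) (auto simp: complex_eq_iff)
  hence "map_poly complex_of_real p = map_poly complex_of_real (\<Prod>r\<leftarrow>rs. [:- r, 1:])"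
    using eq map_poly_prod_lin by simp
  hence peq: "p = (\<Prod>r\<leftarrow>rs. [:- r, 1:])"
    by (metis (no_types, lifting) coeff_map_poly of_real_0 of_real_eq_iff poly_eqI)
  have "size (proots (\<Prod>r\<leftarrow>rs. [:- r, 1:])) = length rs"
  proof (induction rs)
    case Nil thus ?case by simp
  next
    case (Cons r rs)
    have nz: "(\<Prod>r\<leftarrow>rs. [:- r, 1:]) \<noteq> 0"
      using prod_list_zero_iff[of "map (\<lambda>r. [:- r, 1:]) rs"] by auto
    have "proots ([:- r, 1:] * (\<Prod>r\<leftarrow>rs. [:- r, 1:])) = proots [:- r, 1:] + proots (\<Prod>r\<leftarrow>rs. [:- r, 1:])"
      by (rule proots_mult) (use nz in auto)
    thus ?case using Cons by simp
  qed
  thus ?thesis unfolding rs_def peq by simp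
qed

lemma aux_ineq:
  fixes x y k S :: real
  assumes "y\<^sup>2 \<le> k * S" "0 \<le> S" "0 \<le> k"
  shows "(x + y)\<^sup>2 \<le> (k + 1) * (x\<^sup>2 + S)"
proof (cases "k = 0")
  case True
  then have "y = 0" using assms by simp
  then show ?thesis using assms True by simp
next
  case False
  hence kp: "k > 0" using assms by simp
  have h: "0 \<le> (k * x - y)\<^sup>2" by simp
  have "0 \<le> k * (k * x\<^sup>2 + S - 2 * x * y)"
    using h assms(1) by (simp add: power2_eq_square algebra_simps)
  hence "0 \<le> k * x\<^sup>2 + S - 2 * x * y" using kp by (simp add: zero_le_mult_iff)
  thus ?thesis using assms by (simp add: power2_eq_square algebra_simps)
qed

lemma path_in:
  assumes "rtrancl_path (adj_on n E) a xs b"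
  shows "set xs \<subseteq> {..<n}"
  using assms by induction (auto simp: adj_on_def)

lemma path_bound:
  fixes f :: "nat \<Rightarrow> real"
  assumes "rtrancl_path r a xs b"
  shows "(f a - f b)\<^sup>2 \<le> real (length xs) * sum_list (map (\<lambda>(p,q). (f p - f q)\<^sup>2) (zip (a#xs) xs))"
  using assms
proof induction
  case (base x) thus ?case by simp
next
  case (step x y ys z)
  have nn: "0 \<le> sum_list (map (\<lambda>(p,q). (f p - f q)\<^sup>2) (zip (y#ys) ys))"
    by (rule sum_list_nonneg) auto
  have "(f x - f z)\<^sup>2 = ((f x - f y) + (f y - f z))\<^sup>2" by simp
  also have "\<dots> \<le> (real (length ys) + 1) * ((f x - f y)\<^sup>2 + sum_list (map (\<lambda>(p,q). (f p - f q)\<^sup>2) (zip (y#ys) ys)))"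
    by (rule aux_ineq[OF step.IH nn]) simp
  finally show ?case by (simp add: add.commute)
qed

lemma pair_bound:
  fixes f :: "nat \<Rightarrow> real"
  assumes G: "simple_connected_graph n E" and i: "i < n" and j: "j < n"
  shows "(f i - f j)\<^sup>2 \<le> (real n - 1) * (\<Sum>(p,q)\<in>{(p,q). p < n \<and> q < n \<and> E p q}. (f p - f q)\<^sup>2)"
proof -
  let ?g = "\<lambda>(p,q). (f p - f q)\<^sup>2"
  let ?Ed = "{(p,q). p < n \<and> q < n \<and> E p q}"
  have "(adj_on n E)\<^sup>*\<^sup>* i j" using G i j unfolding simple_connected_graph_def by auto
  then obtain xs0 where "rtrancl_path (adj_on n E) i xs0 j" by (auto simp: rtranclp_eq_rtrancl_path)
  then obtain xs where P: "rtrancl_path (adj_on n E) i xs j" and D: "distinct (i # xs)"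
    by (rule rtrancl_path_distinct)
  have sub: "set (i # xs) \<subseteq> {..<n}" using path_in[OF P] i by auto
  have "length (i # xs) \<le> n"
    using card_mono[OF _ sub] distinct_card[OF D] by simp
  hence len: "real (length xs) \<le> real n - 1" by simp
  have steps: "set (zip (i#xs) xs) \<subseteq> ?Ed"
    using P
  proof induction
    case (base x) thus ?case by simp
  next
    case (step x y ys z) thus ?case by (auto simp: adj_on_def)
  qed
  have dz: "distinct (zip (i#xs) xs)" by (rule distinct_zipI1[OF D])
  have fin: "finite ?Ed" by (rule finite_subset[of _ "{..<n} \<times> {..<n}"]) auto
  have "sum_list (map ?g (zip (i#xs) xs)) = sum ?g (set (zip (i#xs) xs))"
    by (rule sum_list_distinct_conv_sum_set[OF dz])
  also have "\<dots> \<le> sum ?g ?Ed"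
    by (rule sum_mono2[OF fin steps]) auto
  finally have sQ: "sum_list (map ?g (zip (i#xs) xs)) \<le> sum ?g ?Ed" .
  have Q0: "0 \<le> sum ?g ?Ed" by (rule sum_nonneg) auto
  have "(f i - f j)\<^sup>2 \<le> real (length xs) * sum_list (map ?g (zip (i#xs) xs))"
    by (rule path_bound[OF P])
  also have "\<dots> \<le> (real n - 1) * sum ?g ?Ed"
    by (rule mult_mono[OF len sQ]) (use len Q0 in \<open>auto intro!: sum_list_nonneg\<close>)
  finally show ?thesis .
qed

lemma pairs_sum_conv:
  fixes g :: "nat \<Rightarrow> nat \<Rightarrow> real"
  shows "(\<Sum>i<n. \<Sum>j<n. if E i j then g i j else 0) = (\<Sum>(p,q)\<in>{(p,q). p < n \<and> q < n \<and> E p q}. g p q)"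
proof -
  have "(\<Sum>i<n. \<Sum>j<n. if E i j then g i j else 0) = (\<Sum>(i,j)\<in>{..<n} \<times> {..<n}. if E i j then g i j else 0)"
    by (rule sum.cartesian_product)
  also have "\<dots> = (\<Sum>x\<in>{..<n} \<times> {..<n}. if E (fst x) (snd x) then g (fst x) (snd x) else 0)"
    by (intro sum.cong refl) auto
  also have "\<dots> = (\<Sum>x\<in>{x \<in> {..<n} \<times> {..<n}. E (fst x) (snd x)}. g (fst x) (snd x))"
    by (rule sum.inter_filter[symmetric]) auto
  also have "{x \<in> {..<n} \<times> {..<n}. E (fst x) (snd x)} = {(p,q). p < n \<and> q < n \<and> E p q}" by auto
  also have "(\<Sum>x\<in>{(p,q). p < n \<and> q < n \<and> E p q}. g (fst x) (snd x)) = (\<Sum>(p,q)\<in>{(p,q). p < n \<and> q < n \<and> E p q}. g p q)"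
    by (intro sum.cong refl) auto
  finally show ?thesis .
qed

lemma final_arith:
  fixes a p m :: real
  assumes h: "2 * a * p \<le> a * a * (a - 1) * (2 * m * p)" and p: "p > 0" and a: "a > 0"
  shows "1 \<le> m * a * (a - 1)"
proof -
  have "(2 * a * p) * 1 \<le> (2 * a * p) * (m * a * (a - 1))" using h by (simp add: algebra_simps)
  moreover have "2 * a * p > 0" using p a by simp
  ultimately show ?thesis by (simp only: mult_le_cancel_left_pos)
qed

lemma lap_eig_bound:
  assumes G: "simple_connected_graph n E"
    and root: "poly (char_poly (laplacian n E)) \<mu> = 0" and mu: "\<mu> > 0"
  shows "1 \<le> \<mu> * real n * (real n - 1)"
proof -
  let ?L = "laplacian n E"
  have L: "?L \<in> carrier_mat n n" by (simp add: laplacian_def)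
  have "eigenvalue ?L \<mu>" using eigenvalue_root_char_poly[OF L] root by simp
  then obtain v where v: "v \<in> carrier_vec n" "v \<noteq> 0\<^sub>v n" "?L *\<^sub>v v = \<mu> \<cdot>\<^sub>v v"
    unfolding eigenvalue_def eigenvector_def using L by auto
  define f where "f i = v $ i" for i
  define D where "D i j = (if E i j then f i - f j else 0)" for i j
  have symE: "E i j \<longleftrightarrow> E j i" for i j using G unfolding simple_connected_graph_def by blast
  have irr: "\<not> E i i" for i using G unfolding simple_connected_graph_def by blast
  have row: "(\<Sum>j<n. D i j) = \<mu> * f i" if i: "i < n" for i
  proof -
    have "(?L *\<^sub>v v) $ i = (\<Sum>j<n. ?L $$ (i,j) * f j)"
      using i L v(1) by (auto simp: mult_mat_vec_def scalar_prod_def lessThan_atLeast0 f_def)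
    also have "\<dots> = (\<Sum>j<n. (if j = i then real (degree n E i) * f i else 0) - (if E i j then f j else 0))"
      by (intro sum.cong refl) (auto simp: laplacian_def i irr)
    also have "\<dots> = real (degree n E i) * f i - (\<Sum>j<n. if E i j then f j else 0)"
      using i by (simp add: sum_subtractf)
    finally have e1: "(?L *\<^sub>v v) $ i = real (degree n E i) * f i - (\<Sum>j<n. if E i j then f j else 0)" .
    have "(?L *\<^sub>v v) $ i = \<mu> * f i" using v(3) i v(1) by (simp add: f_def)
    moreover have "(\<Sum>j<n. if E i j then f i else 0) = real (degree n E i) * f i"
    proof -
      have "(\<Sum>j<n. if E i j then f i else 0) = (\<Sum>j\<in>{j \<in> {..<n}. E i j}. f i)"
        by (rule sum.inter_filter[symmetric]) auto
      also have "{j \<in> {..<n}. E i j} = {j. j < n \<and> E i j}" by auto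
      finally show ?thesis by (simp add: degree_def)
    qed
    moreover have "(\<Sum>j<n. D i j) = (\<Sum>j<n. if E i j then f i else 0) - (\<Sum>j<n. if E i j then f j else 0)"
      unfolding D_def sum_subtractf[symmetric] by (intro sum.cong refl) auto
    ultimately show ?thesis using e1 by simp
  qed
  have Danti: "D j i = - D i j" for i j unfolding D_def using symE[of i j] by auto
  have "(\<Sum>i<n. \<Sum>j<n. D i j) = (\<Sum>j<n. \<Sum>i<n. D i j)" by (rule sum.swap)
  also have "\<dots> = (\<Sum>j<n. \<Sum>i<n. - D j i)" by (intro sum.cong refl) (rule Danti)
  also have "\<dots> = - (\<Sum>j<n. \<Sum>i<n. D j i)" by (simp only: sum_negf)
  finally have "(\<Sum>i<n. \<Sum>j<n. D i j) = 0" by simp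
  moreover have "(\<Sum>i<n. \<Sum>j<n. D i j) = \<mu> * (\<Sum>i<n. f i)"
    by (simp add: row sum_distrib_left)
  ultimately have sumf: "(\<Sum>i<n. f i) = 0" using mu by simp
  define T where "T = (\<Sum>i<n. \<Sum>j<n. f i * D i j)"
  have T1: "T = \<mu> * (\<Sum>i<n. (f i)\<^sup>2)"
  proof -
    have "T = (\<Sum>i<n. f i * (\<Sum>j<n. D i j))" unfolding T_def by (simp add: sum_distrib_left)
    also have "\<dots> = (\<Sum>i<n. \<mu> * (f i)\<^sup>2)" by (intro sum.cong refl) (simp add: row power2_eq_square)
    finally show ?thesis by (simp add: sum_distrib_left)
  qed
  have "T = (\<Sum>j<n. \<Sum>i<n. f i * D i j)" unfolding T_def by (rule sum.swap)
  also have "\<dots> = (\<Sum>j<n. \<Sum>i<n. - f i * D j i)" proof (intro sum.cong refl)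
    fix i j show "f i * D i j = - f i * D j i" by (simp add: Danti[of i j])
  qed
  finally have T2: "T = (\<Sum>i<n. \<Sum>j<n. - f j * D i j)" .
  define Qs where "Qs = (\<Sum>i<n. \<Sum>j<n. if E i j then (f i - f j)\<^sup>2 else 0)"
  have "T + T = (\<Sum>i<n. \<Sum>j<n. f i * D i j + - f j * D i j)"
    by (subst T_def, subst T2) (simp add: sum_negf sum_subtractf)
  also have "\<dots> = Qs" unfolding Qs_def D_def by (intro sum.cong refl) (auto simp: power2_eq_square algebra_simps)
  finally have TQ: "2 * \<mu> * (\<Sum>i<n. (f i)\<^sup>2) = Qs" using T1 by simp
  have pairsum: "(\<Sum>i<n. \<Sum>j<n. (f i - f j)\<^sup>2) = 2 * real n * (\<Sum>i<n. (f i)\<^sup>2)"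
  proof -
    have "(\<Sum>i<n. \<Sum>j<n. (f i - f j)\<^sup>2) = (\<Sum>i<n. \<Sum>j<n. (f i)\<^sup>2 + (f j)\<^sup>2 - 2 * f i * f j)"
      by (intro sum.cong refl) (simp add: power2_diff)
    also have "\<dots> = (\<Sum>i<n. real n * (f i)\<^sup>2 + (\<Sum>j<n. (f j)\<^sup>2) - 2 * f i * (\<Sum>j<n. f j))"
      by (simp add: sum.distrib sum_subtractf sum_distrib_left mult.assoc)
    also have "\<dots> = 2 * real n * (\<Sum>i<n. (f i)\<^sup>2)"
      by (simp add: sumf sum.distrib sum_distrib_left[symmetric])
    finally show ?thesis .
  qed
  have pb: "(f i - f j)\<^sup>2 \<le> (real n - 1) * Qs" if "i < n" "j < n" for i j
    using pair_bound[OF G that, of f] pairs_sum_conv[where g="\<lambda>p q. (f p - f q)\<^sup>2" and n=n and E=E]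
    unfolding Qs_def by simp
  have "2 * real n * (\<Sum>i<n. (f i)\<^sup>2) \<le> (\<Sum>i<n. \<Sum>j<n. (real n - 1) * Qs)"
    unfolding pairsum[symmetric] by (intro sum_mono pb) auto
  also have "\<dots> = real n * real n * (real n - 1) * Qs" by simp
  finally have ineq: "2 * real n * (\<Sum>i<n. (f i)\<^sup>2) \<le> real n * real n * (real n - 1) * (2 * \<mu> * (\<Sum>i<n. (f i)\<^sup>2))"
    using TQ by simp
  have "\<exists>i<n. v $ i \<noteq> 0" using v(1,2) by (auto simp: vec_eq_iff)
  then obtain i0 where i0: "i0 < n" "f i0 \<noteq> 0" by (auto simp: f_def)
  have P: "(\<Sum>i<n. (f i)\<^sup>2) > 0" by (rule sum_pos2[of _ i0]) (use i0 in auto)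
  have n0: "real n > 0" using i0 by simp
  show ?thesis by (rule final_arith[OF ineq P n0])
qed

lemma lambda2_root:
  assumes G: "simple_connected_graph n E" and n: "n \<ge> 2"
  shows "poly (char_poly (laplacian n E)) (lambda2 n E) = 0"
proof -
  let ?L = "laplacian n E"
  let ?p = "char_poly ?L"
  have L: "?L \<in> carrier_mat n n" by (simp add: laplacian_def)
  have symE: "E i j \<longleftrightarrow> E j i" for i j using G unfolding simple_connected_graph_def by blast
  have sym: "?L $$ (i,j) = ?L $$ (j,i)" if "i < n" "j < n" for i j
    using that symE[of i j] by (simp add: laplacian_def)
  obtain as where fa: "char_poly (map_mat complex_of_real ?L) = (\<Prod>a\<leftarrow>as. [:- a, 1:])" and len: "length as = n"
    using char_poly_factorized[of "map_mat complex_of_real ?L" n] L by auto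
  have hom: "char_poly (map_mat complex_of_real ?L) = map_poly complex_of_real ?p"
    by (rule of_real_hom.char_poly_hom[OF L])
  have re: "\<forall>a\<in>set as. Im a = 0"
  proof
    fix a assume a: "a \<in> set as"
    have "poly (char_poly (map_mat complex_of_real ?L)) a = 0"
      unfolding fa using a by (simp add: poly_prod_list prod_list_zero_iff)
    thus "Im a = 0" using sym_eig_real[of ?L n a] L sym by blast
  qed
  have sz: "size (proots ?p) = n" using real_split[OF _ re] fa hom len by simp
  hence p0: "?p \<noteq> 0" using n by auto
  let ?xs = "sorted_list_of_multiset (proots ?p)"
  have "length ?xs = n" using sz by (metis mset_sorted_list_of_multiset size_mset)
  hence "?xs ! 1 \<in> set ?xs" using n by (intro nth_mem) simp
  hence "lambda2 n E \<in># proots ?p" unfolding lambda2_def by (simp only: set_sorted_list_of_multiset)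
  thus ?thesis using p0 by simp
qed

lemma degree_le: "degree n E i \<le> n - 1" if "\<not> E i i" "i < n"
proof -
  have "{j. j < n \<and> E i j} \<subseteq> {..<n} - {i}" using that by auto
  hence "card {j. j < n \<and> E i j} \<le> card ({..<n} - {i})" by (intro card_mono) auto
  thus ?thesis using that by (simp add: degree_def)
qed

theorem lemma20:
  fixes n m :: nat and E :: "nat \<Rightarrow> nat \<Rightarrow> bool" and s :: "nat \<Rightarrow> real"
    and x :: "nat \<Rightarrow> nat" and \<delta> :: real
  assumes "n \<ge> 2"
    and "simple_connected_graph n E"
    and "\<forall>i<n. s i \<ge> 1" and "\<exists>i<n. s i = 1"
    and "\<delta> > 1"
    and "real m \<ge> 8 * \<delta> * real n ^ 2 * total_speed n s * smax n s"
    and "valid_state n m x"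
    and "Psi0 n m s x \<le> 4 * (8 * real n * real (max_degree n E) * smax n s / lambda2 n E)"
  shows "approx_NE n E m s (2 / (1 + \<delta>)) x"
proof -
  note n = assms(1) and G = assms(2) and s1 = assms(3) and dl = assms(5) and mbig = assms(6)
    and Ps = assms(8)
  define S where "S = total_speed n s"
  define sm where "sm = smax n s"
  define \<Delta> where "\<Delta> = max_degree n E"
  define l2 where "l2 = lambda2 n E"
  define P where "P = Psi0 n m s x"
  define K where "K = 8 * real n ^ 2 * sm"
  have spos: "s i > 0" if "i < n" for i using s1 that by force
  have S1: "S \<ge> 1"
  proof -
    have "s 0 \<le> S" unfolding S_def total_speed_def
      by (rule member_le_sum) (use n spos in \<open>auto intro: less_imp_le\<close>)
    thus ?thesis using s1 n by force
  qed
  have sm1: "sm \<ge> 1"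
  proof -
    have "s 0 \<le> sm" unfolding sm_def smax_def by (rule Max_ge) (use n in auto)
    thus ?thesis using s1 n by force
  qed
  have irr: "\<not> E i i" for i using G unfolding simple_connected_graph_def by blast
  have D: "real \<Delta> \<le> real n - 1"
  proof -
    have "\<Delta> \<le> n - 1" unfolding \<Delta>_def max_degree_def
      by (subst Max_le_iff) (use n degree_le irr in auto)
    thus ?thesis using n by linarith
  qed
  have P0: "P \<ge> 0" unfolding P_def Psi0_def by (intro sum_nonneg divide_nonneg_pos) (auto simp: spos)
  have PB: "P \<le> K\<^sup>2"
  proof (cases "l2 > 0")
    case True
    have lb: "1 \<le> l2 * real n * (real n - 1)"
      unfolding l2_def by (rule lap_eig_bound[OF G lambda2_root[OF G n]]) (use True l2_def in simp)
    define R where "R = 8 * real n * real \<Delta> * sm"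
    have R0: "R \<ge> 0" unfolding R_def using sm1 by simp
    have "R / l2 \<le> R * (real n * (real n - 1))"
    proof -
      have "R * 1 \<le> R * (l2 * real n * (real n - 1))" by (rule mult_left_mono[OF lb R0])
      thus ?thesis using True by (simp add: divide_le_eq mult_ac)
    qed
    hence "P \<le> 4 * (R * (real n * (real n - 1)))" using Ps unfolding P_def R_def l2_def \<Delta>_def sm_def by simp
    also have "\<dots> = 32 * real n * real \<Delta> * (real n * (real n - 1)) * sm" unfolding R_def by simp
    also have "\<dots> \<le> 32 * real n * real n * (real n * real n) * (sm * sm)"
    proof -
      have a: "real \<Delta> \<le> real n" using D by simp
      have b: "real n * (real n - 1) \<le> real n * real n" using n by simp
      have c: "sm \<le> sm * sm" using sm1 by (simp add: mult_le_cancel_left1)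
      show ?thesis
        by (intro mult_mono a b c mult_left_mono) (use n sm1 in auto)
    qed
    also have "\<dots> \<le> K\<^sup>2"
    proof -
      have nn: "0 \<le> sm * (sm * (real n * (real n * (real n * real n))))"
        by (intro mult_nonneg_nonneg) (use sm1 in auto)
      show ?thesis unfolding K_def using nn by (simp add: power2_eq_square algebra_simps)
    qed
    finally show ?thesis .
  next
    case False
    have "8 * real n * real \<Delta> * sm / l2 \<le> 0"
      using False sm1 by (intro divide_nonneg_nonpos) auto
    hence "P \<le> 0" using Ps unfolding P_def l2_def \<Delta>_def sm_def by simp
    moreover have "0 \<le> K\<^sup>2" by simp
    ultimately show ?thesis by linarith
  qed
  have K0: "K \<ge> 0" unfolding K_def using sm1 by simp
  define A where "A = real m / S"
  have AK: "\<delta> * K \<le> A"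
  proof -
    have "\<delta> * K * S \<le> real m" using mbig unfolding K_def S_def sm_def by (simp add: mult_ac)
    thus ?thesis unfolding A_def using S1 by (simp add: le_divide_eq)
  qed
  have dev: "\<bar>load m s x k - A\<bar> \<le> K" if k: "k < n" for k
  proof -
    define e where "e = real (weight m x k) - real m * s k / S"
    have sk: "s k \<ge> 1" using s1 k by auto
    have "e\<^sup>2 / s k \<le> P" unfolding P_def Psi0_def e_def S_def
      by (rule member_le_sum[where f = "\<lambda>i. (real (weight m x i) - real m * s i / total_speed n s)\<^sup>2 / s i"])
         (use k spos in \<open>auto intro: divide_nonneg_pos\<close>)
    have eq: "load m s x k - A = e / s k"
      unfolding load_def A_def e_def using sk S1 by (simp add: field_simps)
    have "(e / s k)\<^sup>2 = (e\<^sup>2 / s k) / s k" by (simp add: power2_eq_square)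
    also have "\<dots> \<le> (e\<^sup>2 / s k) / 1"
      by (rule divide_left_mono) (use sk in auto)
    also have "\<dots> = e\<^sup>2 / s k" by simp
    also have "\<dots> \<le> P" by fact
    also have "\<dots> \<le> K\<^sup>2" by (rule PB)
    finally have "\<bar>e / s k\<bar>\<^sup>2 \<le> K\<^sup>2" by (simp only: power2_abs)
    hence "\<bar>e / s k\<bar> \<le> K" by (rule power2_le_imp_le) (rule K0)
    thus ?thesis using eq by simp
  qed
  show ?thesis unfolding approx_NE_def
  proof (intro allI impI)
    fix i j assume i: "i < n" and j: "j < n" and e: "E i j"
    have li: "load m s x i \<le> A + K" using dev[OF i] by simp
    have lj: "A - K \<le> load m s x j" using dev[OF j] by simp
    have d1: "1 + \<delta> > 0" using dl by simp
    have "(1 + \<delta>) * ((1 - 2 / (1 + \<delta>)) * load m s x i - load m s x j)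
          = (\<delta> - 1) * load m s x i - (1 + \<delta>) * load m s x j"
      using d1 by (simp add: field_simps)
    also have "\<dots> \<le> (\<delta> - 1) * (A + K) - (1 + \<delta>) * (A - K)"
      using li lj dl by (intro diff_mono mult_left_mono) auto
    also have "\<dots> = 2 * (\<delta> * K - A)" by (simp add: algebra_simps)
    also have "\<dots> \<le> 0" using AK by simp
    finally have "(1 - 2 / (1 + \<delta>)) * load m s x i - load m s x j \<le> 0"
      using d1 by (simp add: mult_le_0_iff)
    also have "0 \<le> 1 / s j" using spos[OF j] by simp
    finally show "(1 - 2 / (1 + \<delta>)) * load m s x i - load m s x j \<le> 1 / s j" .
  qed
qed

end
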